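(* Let $V$ be a finite node set and let $x=(x_{u,v})$ be a real vector indexed by ordered pairs $(u,v)$ of distinct nodes of $V$ satisfying $0\le x_{u,v}\le 1$ for all such pairs and $\sum_{u\in V\setminus\{v\}}x_{u,v}\le 1$ for every $v\in V$. Let $\mathcal{W}$ be a finite nonempty set of directed walks that all end in the same node $t$, such that for any two distinct walks $W\neq W'\in\mathcal{W}$ there is a node $v$ with $|\delta^-_W(v)\cup\delta^-_{W'}(v)|\ge 2$. Then $$\sum_{W\in\mathcal{W}}x(W)\le\Big(\sum_{W\in\mathcal{W}}\ell_W\Big)-|\mathcal{W}|+1.$$
   Context: A directed walk is a sequence $W=v_0,a_1,v_1,\dots,a_k,v_k$ with arcs $a_i=(v_{i-1},v_i)$, $v_{i-1}\neq v_i$; it may repeat nodes and arcs. Its length $\ell_W=k$ is the number of arcs counted with multiplicity, and $x(W)=\sum_{i=1}^k x_{a_i}$ (with multiplicity). For a node $v$, $\delta^-_W(v)$ denotes the set of arcs of $W$ entering $v$ (i.e. the set of $a_i$ with head $v_i=v$). *)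

theory Defs
  imports Complex_Main
begin

text \<open>A directed walk v0, a1, v1, ..., ak, vk is represented by its node list [v0, ..., vk]
  (nonempty); its arcs are the consecutive pairs (v_{i-1}, v_i), listed with multiplicity.\<close>

definition walk_arcs :: "'a list \<Rightarrow> ('a \<times> 'a) list" where
  "walk_arcs W = zip W (tl W)"

definition is_walk :: "'a set \<Rightarrow> 'a list \<Rightarrow> bool" where
  "is_walk V W \<longleftrightarrow> W \<noteq> [] \<and> set W \<subseteq> V \<and> (\<forall>(u, v) \<in> set (walk_arcs W). u \<noteq> v)"

definition walk_len :: "'a list \<Rightarrow> nat" where
  "walk_len W = length (walk_arcs W)"

definition walk_weight :: "('a \<Rightarrow> 'a \<Rightarrow> real) \<Rightarrow> 'a list \<Rightarrow> real" where
  "walk_weight x W = sum_list (map (\<lambda>(u, v). x u v) (walk_arcs W))"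

definition in_arcs :: "'a list \<Rightarrow> 'a \<Rightarrow> ('a \<times> 'a) set" where
  "in_arcs W v = {a \<in> set (walk_arcs W). snd a = v}"

end

theory Submission imports Defs begin

lemma abstract_main:
  fixes IN :: "'w \<Rightarrow> 'v \<Rightarrow> 'b set" and X :: "'b \<Rightarrow> real" and WS :: "'w set"
  assumes fin: "\<And>W v. finite (IN W v)"
    and X01: "\<And>W v a. W \<in> WS \<Longrightarrow> a \<in> IN W v \<Longrightarrow> 0 \<le> X a \<and> X a \<le> 1"
    and sumle: "\<And>v B. finite B \<Longrightarrow> B \<subseteq> (\<Union>W\<in>WS. IN W v) \<Longrightarrow> sum X B \<le> 1"
  shows "finite U \<Longrightarrow> finite S \<Longrightarrow> S \<noteq> {} \<Longrightarrow> S \<subseteq> WS \<Longrightarrow>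
    (\<forall>W\<in>S. \<forall>W'\<in>S. W \<noteq> W' \<longrightarrow> (\<exists>v\<in>U. card (IN W v \<union> IN W' v) \<ge> 2)) \<Longrightarrow>
    real (card S) - 1 \<le> (\<Sum>W\<in>S. \<Sum>v\<in>U. \<Sum>a\<in>IN W v. 1 - X a)"
proof (induction "card S" arbitrary: S U rule: less_induct)
  case less
  define F where "F = (\<lambda>U S. (\<Sum>W\<in>S. \<Sum>v\<in>U. \<Sum>a\<in>IN W v. 1 - X a))"
  have Fnn: "0 \<le> F U' S'" if "S' \<subseteq> WS" for U' S'
    unfolding F_def
    by (intro sum_nonneg) (use that X01 in fastforce)
  show ?case
  proof (cases "\<exists>W\<in>S. \<exists>W'\<in>S. W \<noteq> W'")
    case False
    then obtain W where "S = {W}" using less.prems(3) by blast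
    then show ?thesis using Fnn[of S U] less.prems unfolding F_def by simp
  next
    case True
    then obtain W W' v where WW: "W \<in> S" "W' \<in> S" "W \<noteq> W'" "v \<in> U"
       and cv: "card (IN W v \<union> IN W' v) \<ge> 2"
      using less.prems(5) by blast
    define A where "A = (\<Union>W\<in>S. IN W v)"
    have finA: "finite A" unfolding A_def using less.prems(2) fin by blast
    have "IN W v \<union> IN W' v \<noteq> {}" using cv by (metis card.empty not_numeral_le_zero)
    then have Ane: "A \<noteq> {}" unfolding A_def using WW by blast
    define n where "n = (\<lambda>a. card {W\<in>S. a \<in> IN W v})"
    obtain as where as: "as \<in> A" "\<And>a. a \<in> A \<Longrightarrow> n a \<le> n as"
    proof -
      have "Max (n ` A) \<in> n ` A" using finA Ane by simp
      then obtain as where "as \<in> A" "n as = Max (n ` A)" by force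
      then show ?thesis using that finA by simp
    qed
    define P where "P = {W\<in>S. IN W v \<subseteq> {as}}"
    have PS: "P \<subseteq> S" unfolding P_def by blast
    have PneS: "P \<noteq> S"
    proof
      assume "P = S"
      then have "IN W v \<union> IN W' v \<subseteq> {as}" using WW unfolding P_def by blast
      then have "card (IN W v \<union> IN W' v) \<le> 1"
        by (metis card.empty card.insert empty_iff finite.intros(1) card_mono finite.intros(2)
            insert_absorb One_nat_def)
      then show False using cv by simp
    qed
    define G where "G = (\<Sum>W\<in>S. \<Sum>a\<in>IN W v. 1 - X a)"
    have split: "F U S = F (U - {v}) S + G"
      unfolding F_def G_def
      by (simp add: sum.remove[OF less.prems(1) WW(4)] sum.distrib)
    have mono: "F (U - {v}) P \<le> F (U - {v}) S"
      unfolding F_def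
      by (rule sum_mono2) (use less.prems PS X01 in \<open>auto intro!: sum_nonneg\<close>)
    have G: "real (card (S - P)) \<le> G"
    proof -
      have XA: "0 \<le> X a" if "a \<in> A" for a using that X01 less.prems(4) unfolding A_def by blast
      have g1: "(\<Sum>W\<in>S. \<Sum>a\<in>IN W v. X a) = (\<Sum>a\<in>A. real (n a) * X a)"
      proof -
        have "(\<Sum>W\<in>S. \<Sum>a\<in>IN W v. X a) = (\<Sum>W\<in>S. \<Sum>a\<in>A. if a \<in> IN W v then X a else 0)"
        proof (rule sum.cong[OF refl])
          fix W assume "W \<in> S"
          then have "IN W v = {a\<in>A. a \<in> IN W v}" unfolding A_def by blast
          then show "(\<Sum>a\<in>IN W v. X a) = (\<Sum>a\<in>A. if a \<in> IN W v then X a else 0)"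
            using sum.inter_filter[OF finA, of X "\<lambda>a. a \<in> IN W v"] by simp
        qed
        also have "\<dots> = (\<Sum>a\<in>A. \<Sum>W\<in>S. if a \<in> IN W v then X a else 0)" by (rule sum.swap)
        also have "\<dots> = (\<Sum>a\<in>A. real (n a) * X a)"
        proof (rule sum.cong[OF refl])
          fix a
          show "(\<Sum>W\<in>S. if a \<in> IN W v then X a else 0) = real (n a) * X a"
            using sum.inter_filter[OF less.prems(2), of "\<lambda>_. X a" "\<lambda>W. a \<in> IN W v", symmetric]
            unfolding n_def by simp
        qed
        finally show ?thesis .
      qed
      have g2: "(\<Sum>a\<in>A. real (n a) * X a) \<le> real (n as)"
      proof -
        have "(\<Sum>a\<in>A. real (n a) * X a) \<le> (\<Sum>a\<in>A. real (n as) * X a)"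
          by (rule sum_mono) (use as XA in \<open>auto intro: mult_right_mono\<close>)
        also have "\<dots> = real (n as) * sum X A" by (simp add: sum_distrib_left)
        also have "\<dots> \<le> real (n as)"
          using sumle[OF finA, of v] unfolding A_def using less.prems(4)
          by (intro mult_left_le) (auto simp: A_def)
        finally show ?thesis .
      qed
      have g3: "real (card (S - P)) + real (n as) \<le> (\<Sum>W\<in>S. real (card (IN W v)))"
      proof -
        have "(\<Sum>W\<in>S. (if W \<in> S - P then 1 else 0) + (if as \<in> IN W v then 1 else 0))
             \<le> (\<Sum>W\<in>S. real (card (IN W v)))"
        proof (rule sum_mono)
          fix W assume WS: "W \<in> S"
          show "(if W \<in> S - P then 1 else 0) + (if as \<in> IN W v then 1 else 0) \<le> real (card (IN W v))"
          proof (cases "W \<in> P")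
            case True
            then show ?thesis using fin[of W v]
              by (auto simp: card_gt_0_iff Suc_le_eq)
          next
            case False
            then obtain b where b: "b \<in> IN W v" "b \<noteq> as" using WS unfolding P_def by blast
            show ?thesis
            proof (cases "as \<in> IN W v")
              case True
              then have "{as, b} \<subseteq> IN W v" using b by blast
              then have "card {as, b} \<le> card (IN W v)" using fin by (rule card_mono[rotated])
              then show ?thesis using b True False WS by simp
            next
              case F2: False
              then show ?thesis using b False WS fin[of W v] by (auto simp: card_gt_0_iff Suc_le_eq)
            qed
          qed
        qed
        moreover have "(\<Sum>W\<in>S. (if W \<in> S - P then 1 else 0) + (if as \<in> IN W v then 1 else 0))
          = real (card (S - P)) + real (n as)"
        proof -
          have e1: "(\<Sum>W\<in>S. (if W \<in> S - P then 1 else 0 :: real)) = real (card (S - P))"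
          proof -
            have "S - P = {W\<in>S. W \<in> S - P}" by blast
            then show ?thesis using sum.inter_filter[OF less.prems(2), of "\<lambda>_. 1::real" "\<lambda>W. W \<in> S - P", symmetric]
              by simp
          qed
          have e2: "(\<Sum>W\<in>S. (if as \<in> IN W v then 1 else 0 :: real)) = real (n as)"
            using sum.inter_filter[OF less.prems(2), of "\<lambda>_. 1::real" "\<lambda>W. as \<in> IN W v", symmetric]
            unfolding n_def by simp
          show ?thesis using e1 e2 by (simp add: sum.distrib)
        qed
        ultimately show ?thesis by simp
      qed
      have "G = (\<Sum>W\<in>S. real (card (IN W v))) - (\<Sum>W\<in>S. \<Sum>a\<in>IN W v. X a)"
        unfolding G_def by (simp add: sum_subtractf sum.distrib)
      then show ?thesis using g1 g2 g3 by simp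
    qed
    have cardS: "card S = card P + card (S - P)"
      using PS less.prems(2) by (metis card_Diff_subset card_mono finite_subset le_add_diff_inverse)
    show ?thesis
    proof (cases "P = {}")
      case True
      then show ?thesis using split G Fnn[of S "U - {v}"] less.prems(4) unfolding F_def by simp
    next
      case False
      have "card P < card S" using PS PneS less.prems(2) by (simp add: psubset_card_mono)
      moreover have "\<forall>W\<in>P. \<forall>W'\<in>P. W \<noteq> W' \<longrightarrow> (\<exists>v'\<in>U - {v}. card (IN W v' \<union> IN W' v') \<ge> 2)"
      proof (intro ballI impI)
        fix W1 W2 assume h: "W1 \<in> P" "W2 \<in> P" "W1 \<noteq> W2"
        then obtain v' where v': "v' \<in> U" "card (IN W1 v' \<union> IN W2 v') \<ge> 2"
          using less.prems(5) PS by blast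
        have "v' \<noteq> v"
        proof
          assume "v' = v"
          then have "IN W1 v' \<union> IN W2 v' \<subseteq> {as}" using h unfolding P_def by blast
          then have "card (IN W1 v' \<union> IN W2 v') \<le> 1"
            by (metis card.empty card.insert empty_iff finite.intros(1) card_mono finite.intros(2)
                insert_absorb One_nat_def)
          then show False using v' by simp
        qed
        then show "\<exists>v'\<in>U - {v}. card (IN W1 v' \<union> IN W2 v') \<ge> 2" using v' by blast
      qed
      ultimately have "real (card P) - 1 \<le> F (U - {v}) P"
        unfolding F_def
        using less.hyps[of P "U - {v}"] less.prems PS False finite_subset by blast
      then show ?thesis using split mono G cardS unfolding F_def by simp
    qed
  qed
qed

lemma sum_set_le_sum_list:
  fixes f :: "'b \<Rightarrow> real"
  shows "(\<And>a. a \<in> set L \<Longrightarrow> 0 \<le> f a) \<Longrightarrow> sum f (set L) \<le> sum_list (map f L)"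
proof (induction L)
  case Nil then show ?case by simp
next
  case (Cons a L)
  have "sum f (set (a # L)) \<le> f a + sum f (set L)"
    using Cons.prems by (simp add: sum.insert_if)
  then show ?case using Cons by simp
qed

lemma arcs_in_V: "is_walk V W \<Longrightarrow> a \<in> set (walk_arcs W) \<Longrightarrow> fst a \<in> V \<and> snd a \<in> V \<and> fst a \<noteq> snd a"
  unfolding is_walk_def walk_arcs_def
  by (cases a) (auto dest: set_zip_leftD set_zip_rightD list.set_sel(2) simp: list.set_sel)


lemma per_walk:
  assumes "finite V" and sg: "snd ` set (walk_arcs W) \<subseteq> V"
    and nn: "\<And>a. a \<in> set (walk_arcs W) \<Longrightarrow> 0 \<le> 1 - x (fst a) (snd a)"
  shows "(\<Sum>v\<in>V. \<Sum>a\<in>in_arcs W v. 1 - x (fst a) (snd a)) \<le> real (walk_len W) - walk_weight x W"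
proof -
  have "(\<Sum>v\<in>V. \<Sum>a\<in>in_arcs W v. 1 - x (fst a) (snd a)) = (\<Sum>v\<in>V. \<Sum>a\<in>{a\<in>set (walk_arcs W). snd a = v}. 1 - x (fst a) (snd a))"
    unfolding in_arcs_def by (rule refl)
  also have "\<dots> = (\<Sum>a\<in>set (walk_arcs W). 1 - x (fst a) (snd a))"
    by (rule sum.group[OF finite_set assms(1) sg])
  also have "\<dots> \<le> sum_list (map (\<lambda>a. 1 - x (fst a) (snd a)) (walk_arcs W))"
    by (rule sum_set_le_sum_list) (rule nn)
  also have "\<dots> = real (walk_len W) - walk_weight x W"
  proof -
    have e1: "(\<lambda>(u, v). x u v) = (\<lambda>a. x (fst a) (snd a))" by (rule ext) (simp add: split_beta)
    have e2: "\<And>L::('a \<times> 'a) list. (\<Sum>a\<leftarrow>L. (1::real)) = real (length L)"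
      by (induct_tac L) simp_all
    show ?thesis unfolding walk_len_def walk_weight_def e1
      by (simp only: sum_list_subtractf e2)
  qed
  finally show ?thesis .
qed

theorem lemma1:
  fixes V :: "'a set" and x :: "'a \<Rightarrow> 'a \<Rightarrow> real" and \<W> :: "'a list set" and t :: 'a
  assumes "finite V"
    and "\<And>u v. u \<in> V \<Longrightarrow> v \<in> V \<Longrightarrow> u \<noteq> v \<Longrightarrow> 0 \<le> x u v \<and> x u v \<le> 1"
    and "\<And>v. v \<in> V \<Longrightarrow> (\<Sum>u\<in>V - {v}. x u v) \<le> 1"
    and "finite \<W>" and "\<W> \<noteq> {}"
    and "\<And>W. W \<in> \<W> \<Longrightarrow> is_walk V W \<and> last W = t"
    and "\<And>W W'. W \<in> \<W> \<Longrightarrow> W' \<in> \<W> \<Longrightarrow> W \<noteq> W' \<Longrightarrow>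
           \<exists>v. card (in_arcs W v \<union> in_arcs W' v) \<ge> 2"
  shows "(\<Sum>W\<in>\<W>. walk_weight x W) \<le> real (\<Sum>W\<in>\<W>. walk_len W) - real (card \<W>) + 1"
proof -
  define X where "X = (\<lambda>a. x (fst a) (snd a))"
  have inV: "fst a \<in> V \<and> snd a \<in> V \<and> fst a \<noteq> snd a" if "W \<in> \<W>" "a \<in> set (walk_arcs W)" for W a
    using arcs_in_V assms(6) that by blast
  have fin: "finite (in_arcs W v)" for W v unfolding in_arcs_def by simp
  have X01: "0 \<le> X a \<and> X a \<le> 1" if "W \<in> \<W>" "a \<in> in_arcs W v" for W v a
  proof -
    have "a \<in> set (walk_arcs W)" using that(2) unfolding in_arcs_def by blast
    then have "fst a \<in> V" "snd a \<in> V" "fst a \<noteq> snd a" using inV[OF that(1)] by blast+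
    then show ?thesis using assms(2)[of "fst a" "snd a"] unfolding X_def by blast
  qed
  have sumle: "sum X B \<le> 1" if Bh: "finite B" "B \<subseteq> (\<Union>W\<in>\<W>. in_arcs W v)" for v B
  proof (cases "B = {}")
    case True then show ?thesis by simp
  next
    case False
    have sub: "B \<subseteq> (\<lambda>u. (u, v)) ` (V - {v})"
    proof
      fix a assume "a \<in> B"
      then obtain W where "W \<in> \<W>" "a \<in> in_arcs W v" using Bh by blast
      then have "snd a = v" "a \<in> set (walk_arcs W)" "fst a \<in> V" "fst a \<noteq> v"
        using inV[of W a] unfolding in_arcs_def by auto
      then show "a \<in> (\<lambda>u. (u, v)) ` (V - {v})" by (metis DiffI image_eqI prod.collapse singletonD)
    qed
    obtain a0 where "a0 \<in> B" using False by blast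
    then obtain W where "W \<in> \<W>" "a0 \<in> in_arcs W v" using Bh by blast
    then have vV: "v \<in> V" using inV[of W a0] unfolding in_arcs_def by auto
    have "sum X B \<le> sum X ((\<lambda>u. (u, v)) ` (V - {v}))"
      proof (rule sum_mono2)
      show "finite ((\<lambda>u. (u, v)) ` (V - {v}))" using assms(1) by simp
      show "B \<subseteq> (\<lambda>u. (u, v)) ` (V - {v})" by (rule sub)
      fix b assume "b \<in> (\<lambda>u. (u, v)) ` (V - {v}) - B"
      then obtain u where "b = (u, v)" "u \<in> V" "u \<noteq> v" by blast
      then show "0 \<le> X b" using assms(2)[of u v] vV unfolding X_def by simp
    qed
    also have "\<dots> = (\<Sum>u\<in>V - {v}. x u v)"
    proof -
      have "inj_on (\<lambda>u. (u, v)) (V - {v})" by (rule inj_onI) simp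
      then show ?thesis by (simp add: sum.reindex X_def)
    qed
    also have "\<dots> \<le> 1" using assms(3) vV .
    finally show ?thesis .
  qed
  have conf: "\<forall>W\<in>\<W>. \<forall>W'\<in>\<W>. W \<noteq> W' \<longrightarrow> (\<exists>v\<in>V. card (in_arcs W v \<union> in_arcs W' v) \<ge> 2)"
  proof (intro ballI impI)
    fix W W' assume h: "W \<in> \<W>" "W' \<in> \<W>" "W \<noteq> W'"
    then obtain v where v: "card (in_arcs W v \<union> in_arcs W' v) \<ge> 2" using assms(7) by blast
    then have "in_arcs W v \<union> in_arcs W' v \<noteq> {}" by (metis card.empty not_numeral_le_zero)
    then obtain a where "a \<in> in_arcs W v \<or> a \<in> in_arcs W' v" by blast
    then have "v \<in> V" using inV[of W a] inV[of W' a] h unfolding in_arcs_def by auto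
    then show "\<exists>v\<in>V. card (in_arcs W v \<union> in_arcs W' v) \<ge> 2" using v by blast
  qed
  have main: "real (card \<W>) - 1 \<le> (\<Sum>W\<in>\<W>. \<Sum>v\<in>V. \<Sum>a\<in>in_arcs W v. 1 - X a)"
    by (rule abstract_main[where IN=in_arcs and X=X and WS=\<W> and U=V and S=\<W>,
          OF fin X01 sumle assms(1) assms(4) assms(5) subset_refl conf])
  have per: "(\<Sum>v\<in>V. \<Sum>a\<in>in_arcs W v. 1 - X a) \<le> real (walk_len W) - walk_weight x W"
    if "W \<in> \<W>" for W
    unfolding X_def
  proof (rule per_walk[OF assms(1)])
    show "snd ` set (walk_arcs W) \<subseteq> V" using inV[OF that] by (intro image_subsetI) blast
    fix a assume "a \<in> set (walk_arcs W)"
    then have "fst a \<in> V" "snd a \<in> V" "fst a \<noteq> snd a" using inV[OF that] by blast+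
    then have "x (fst a) (snd a) \<le> 1" using assms(2)[of "fst a" "snd a"] by blast
    then show "0 \<le> 1 - x (fst a) (snd a)" by simp
  qed
  have "real (card \<W>) - 1 \<le> (\<Sum>W\<in>\<W>. real (walk_len W) - walk_weight x W)"
  proof -
    have "(\<Sum>W\<in>\<W>. \<Sum>v\<in>V. \<Sum>a\<in>in_arcs W v. 1 - X a) \<le> (\<Sum>W\<in>\<W>. real (walk_len W) - walk_weight x W)"
      by (rule sum_mono) (rule per)
    then show ?thesis using main by linarith
  qed
  then show ?thesis by (simp add: sum_subtractf)
qed

end
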